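(* Let $D$ be a digraph and $X, Y \subseteq V(D)$ such that no vertex of $X$ has an ingoing edge and no vertex of $Y$ has an outgoing edge. Let $X' \subseteq X$ be $(X,Y)$-finitely extendable in $D$. Suppose that for some finite $U \subseteq V(D) \setminus X'$ the set $X'$ is joinable to $Y \setminus U$ in $D - U$. Then $U$ can be extended by at most $|U|$ many new vertices from $X \setminus X'$ to a set $W$ (so $U \subseteq W$, $W \setminus U \subseteq X \setminus X'$, $|W \setminus U| \le |U|$) such that $X'$ is $(X \setminus W, Y \setminus W)$-finitely extendable in $D - W$.
   Context: Digraphs have no loops or parallel edges; $D - U$ denotes $D$ with the vertex set $U$ deleted. An $(A,B)$-path is a directed path whose initial vertex is in $A$, whose terminal vertex is in $B$, and which is internally disjoint from $A \cup B$; an $(A,B)$-path-system is a set of pairwise vertex-disjoint $(A,B)$-paths. $V^-(\mathcal{P})$ is the set of initial vertices of the paths in $\mathcal{P}$. In a digraph $H$, $A$ is joinable to $B$ if there is an $(A,B)$-path-system $\mathcal{P}$ in $H$ with $V^-(\mathcal{P}) = A$. For $A, B \subseteq V(H)$, a subset $A' \subseteq A$ is $(A,B)$-finitely extendable in $H$ if every $O$ with $A' \subseteq O \subseteq A$ and $|O \setminus A'| < \aleph_0$ is joinable to $B$ in $H$. *)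

theory Defs
  imports Main
begin

text \<open>A digraph is given by a (possibly infinite) vertex set V and an edge
relation E on V without loops (parallel edges are irrelevant here).\<close>
definition digraph :: "'a set \<Rightarrow> ('a \<times> 'a) set \<Rightarrow> bool" where
  "digraph V E \<longleftrightarrow> E \<subseteq> V \<times> V \<and> (\<forall>v. (v, v) \<notin> E)"

definition del_verts :: "('a \<times> 'a) set \<Rightarrow> 'a set \<Rightarrow> ('a \<times> 'a) set" where
  "del_verts E U = E \<inter> ((- U) \<times> (- U))"

definition dpath :: "'a set \<Rightarrow> ('a \<times> 'a) set \<Rightarrow> 'a list \<Rightarrow> bool" where
  "dpath V E p \<longleftrightarrow> p \<noteq> [] \<and> distinct p \<and> set p \<subseteq> V \<and>
     (\<forall>i. Suc i < length p \<longrightarrow> (p ! i, p ! Suc i) \<in> E)"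

definition AB_path :: "'a set \<Rightarrow> ('a \<times> 'a) set \<Rightarrow> 'a set \<Rightarrow> 'a set \<Rightarrow> 'a list \<Rightarrow> bool" where
  "AB_path V E A B p \<longleftrightarrow> dpath V E p \<and> hd p \<in> A \<and> last p \<in> B \<and>
     set (butlast (tl p)) \<inter> (A \<union> B) = {}"

definition AB_path_system :: "'a set \<Rightarrow> ('a \<times> 'a) set \<Rightarrow> 'a set \<Rightarrow> 'a set \<Rightarrow> 'a list set \<Rightarrow> bool" where
  "AB_path_system V E A B P \<longleftrightarrow> (\<forall>p\<in>P. AB_path V E A B p) \<and>
     (\<forall>p\<in>P. \<forall>q\<in>P. p \<noteq> q \<longrightarrow> set p \<inter> set q = {})"

definition init_verts :: "'a list set \<Rightarrow> 'a set" where
  "init_verts P = hd ` P"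

definition joinable :: "'a set \<Rightarrow> ('a \<times> 'a) set \<Rightarrow> 'a set \<Rightarrow> 'a set \<Rightarrow> bool" where
  "joinable V E A B \<longleftrightarrow> (\<exists>P. AB_path_system V E A B P \<and> init_verts P = A)"

definition fin_extendable :: "'a set \<Rightarrow> ('a \<times> 'a) set \<Rightarrow> 'a set \<Rightarrow> 'a set \<Rightarrow> 'a set \<Rightarrow> bool" where
  "fin_extendable V E A B A' \<longleftrightarrow> A' \<subseteq> A \<and>
     (\<forall>S. A' \<subseteq> S \<and> S \<subseteq> A \<and> finite (S - A') \<longrightarrow> joinable V E S B)"

end

theory Submission
  imports Defs
begin

lemma dpath_take: assumes "dpath V E p" "0 < i" shows "dpath V E (take i p)"
  using assms unfolding dpath_def by (auto dest: in_set_takeD)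

lemma dpath_drop: assumes "dpath V E p" "j < length p" shows "dpath V E (drop j p)"
  using assms unfolding dpath_def by (auto dest: in_set_dropD simp: add.commute add_Suc_right)

lemma dpath_app:
  assumes "dpath V E xs" "dpath V E ys" "set xs \<inter> set ys = {}" "(last xs, hd ys) \<in> E"
  shows "dpath V E (xs @ ys)"
  unfolding dpath_def
proof (intro conjI allI impI)
  show "xs @ ys \<noteq> []" using assms(1) by (simp add: dpath_def)
  show "distinct (xs @ ys)" using assms by (simp add: dpath_def)
  show "set (xs @ ys) \<subseteq> V" using assms by (simp add: dpath_def)
  fix i assume i: "Suc i < length (xs @ ys)"
  have xs: "xs \<noteq> []" and ys: "ys \<noteq> []" using assms by (auto simp: dpath_def)
  consider "Suc i < length xs" | "Suc i = length xs" | "length xs < Suc i" by linarith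
  thus "((xs @ ys) ! i, (xs @ ys) ! Suc i) \<in> E"
  proof cases
    case 1 thus ?thesis using assms(1) by (simp add: nth_append dpath_def)
  next
    case 2
    have "i = length xs - 1" using 2 by simp
    hence "(xs @ ys) ! i = last xs" using 2 xs by (simp add: nth_append last_conv_nth)
    moreover have "(xs @ ys) ! Suc i = hd ys" using 2 ys by (simp add: nth_append hd_conv_nth)
    ultimately show ?thesis using assms(4) by simp
  next
    case 3
    then obtain k where k: "i = length xs + k" by (metis less_Suc_eq_le le_iff_add)
    have "Suc k < length ys" using i k by simp
    hence "(ys ! k, ys ! Suc k) \<in> E" using assms(2) by (simp add: dpath_def)
    thus ?thesis using k by (simp add: nth_append)
  qed
qed

locale pg =
  fixes V :: "'a set" and E :: "('a \<times> 'a) set" and X Y :: "'a set"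
  assumes src: "\<And>x u. x \<in> X \<Longrightarrow> (u, x) \<notin> E"
    and snk: "\<And>y w. y \<in> Y \<Longrightarrow> (y, w) \<notin> E"
begin

definition lnk :: "'a set \<Rightarrow> 'a list set \<Rightarrow> bool" where
  "lnk S P \<longleftrightarrow> (\<forall>p\<in>P. dpath V E p \<and> hd p \<in> S \<and> last p \<in> Y) \<and>
     (\<forall>p\<in>P. \<forall>q\<in>P. p \<noteq> q \<longrightarrow> set p \<inter> set q = {}) \<and> hd ` P = S"

lemma dpath_X: assumes "dpath V E p" "i < length p" "p ! i \<in> X" shows "i = 0"
proof (rule ccontr)
  assume "i \<noteq> 0"
  then obtain k where k: "i = Suc k" by (cases i) auto
  with assms have "(p ! k, p ! i) \<in> E" unfolding dpath_def by auto
  with src[OF assms(3)] show False by blast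
qed

lemma dpath_Y: assumes "dpath V E p" "i < length p" "p ! i \<in> Y" shows "Suc i = length p"
proof (rule ccontr)
  assume "Suc i \<noteq> length p"
  with assms have "(p ! i, p ! Suc i) \<in> E" unfolding dpath_def by auto
  with snk[OF assms(3)] show False by blast
qed

lemma AB_path_iff:
  assumes "S \<subseteq> X"
  shows "AB_path V E S Y p \<longleftrightarrow> dpath V E p \<and> hd p \<in> S \<and> last p \<in> Y"
proof
  assume "dpath V E p \<and> hd p \<in> S \<and> last p \<in> Y"
  hence d: "dpath V E p" and h: "hd p \<in> S" and l: "last p \<in> Y" by auto
  have "set (butlast (tl p)) \<inter> (S \<union> Y) = {}"
  proof (rule ccontr)
    assume "set (butlast (tl p)) \<inter> (S \<union> Y) \<noteq> {}"
    then obtain v where v: "v \<in> set (butlast (tl p))" "v \<in> S \<union> Y" by blast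
    then obtain k where k: "k < length (butlast (tl p))" "butlast (tl p) ! k = v"
      by (metis in_set_conv_nth)
    have len: "Suc (Suc k) < length p" using k(1) by auto
    have "v = p ! Suc k" using k len
      by (simp add: nth_butlast nth_tl)
    show False
    proof (cases "v \<in> S")
      case True
      hence "p ! Suc k \<in> X" using assms \<open>v = p ! Suc k\<close> by auto
      from dpath_X[OF d _ this] len show False by simp
    next
      case False
      hence "p ! Suc k \<in> Y" using v \<open>v = p ! Suc k\<close> by auto
      from dpath_Y[OF d _ this] len show False by simp
    qed
  qed
  thus "AB_path V E S Y p" using d h l unfolding AB_path_def by auto
qed (auto simp: AB_path_def)

lemma joinable_iff:
  assumes "S \<subseteq> X" shows "joinable V E S Y \<longleftrightarrow> (\<exists>P. lnk S P)"
  unfolding joinable_def lnk_def AB_path_system_def init_verts_def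
  using AB_path_iff[OF assms] by auto

end


context pg begin

lemma lnk_unique_hd:
  assumes "lnk S P" "p \<in> P" "q \<in> P" "hd p = hd q" shows "p = q"
proof (rule ccontr)
  assume "p \<noteq> q"
  with assms have "set p \<inter> set q = {}" unfolding lnk_def by blast
  moreover have "p \<noteq> []" "q \<noteq> []" using assms unfolding lnk_def dpath_def by auto
  ultimately show False using assms(4) by (metis disjoint_iff hd_in_set)
qed

lemma lnk_path:
  assumes "lnk S P" "x \<in> S"
  shows "(THE p. p \<in> P \<and> hd p = x) \<in> P \<and> hd (THE p. p \<in> P \<and> hd p = x) = x"
proof -
  obtain p where p: "p \<in> P" "hd p = x" using assms unfolding lnk_def by force
  have "\<exists>!p. p \<in> P \<and> hd p = x" using p lnk_unique_hd[OF assms(1)] by blast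
  from theI'[OF this] show ?thesis .
qed

lemma X_in_path_hd:
  assumes "dpath V E q" "v \<in> set q" "v \<in> X" shows "v = hd q"
proof -
  obtain k where k: "k < length q" "q ! k = v" using assms(2) by (metis in_set_conv_nth)
  have "k = 0" using dpath_X[OF assms(1) k(1)] k assms(3) by simp
  thus ?thesis using k assms(1) by (simp add: hd_conv_nth dpath_def)
qed

end

definition used :: "('a \<Rightarrow> 'a list option) \<Rightarrow> 'a set" where
  "used M = {v. \<exists>x q. M x = Some q \<and> v \<in> set q}"

type_synonym 'a state = "('a \<Rightarrow> 'a list option) \<times> ('a \<Rightarrow> nat) \<times> 'a option \<times> 'a option"

locale pym = pg +
  fixes B C :: "'a set" and L0 P :: "'a list set" and s0 :: 'a
  assumes BX: "B \<subseteq> X" and CX: "C \<subseteq> X" and L0: "lnk B L0" and Pl: "lnk C P"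
    and s0C: "s0 \<in> C" and s0B: "s0 \<notin> B"
begin

definition pp :: "'a \<Rightarrow> 'a list" where "pp x = (THE p. p \<in> P \<and> hd p = x)"
definition orig :: "'a \<Rightarrow> 'a list" where "orig x = (THE p. p \<in> L0 \<and> hd p = x)"

lemma pp: assumes "x \<in> C"
  shows "dpath V E (pp x)" "hd (pp x) = x" "last (pp x) \<in> Y" "pp x \<noteq> []"
  using lnk_path[OF Pl assms] Pl unfolding pp_def lnk_def dpath_def by auto

lemma pp_disj: assumes "x \<in> C" "y \<in> C" "x \<noteq> y" shows "set (pp x) \<inter> set (pp y) = {}"
  using lnk_path[OF Pl assms(1)] lnk_path[OF Pl assms(2)] Pl assms(3) unfolding pp_def lnk_def
  by metis

lemma orig: assumes "x \<in> B"
  shows "orig x \<in> L0" "hd (orig x) = x"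
  using lnk_path[OF L0 assms] unfolding orig_def by auto

definition hi :: "('a \<Rightarrow> 'a list option) \<Rightarrow> 'a \<Rightarrow> nat" where
  "hi M s = (LEAST i. i < length (pp s) \<and> pp s ! i \<in> used M)"
definition ht :: "('a \<Rightarrow> 'a list option) \<Rightarrow> 'a \<Rightarrow> 'a" where
  "ht M s = (THE t. \<exists>q. M t = Some q \<and> pp s ! hi M s \<in> set q)"
definition hj :: "('a \<Rightarrow> 'a list option) \<Rightarrow> 'a \<Rightarrow> nat" where
  "hj M s = (LEAST j. j < length (the (M (ht M s))) \<and> the (M (ht M s)) ! j = pp s ! hi M s)"

definition stepS :: "('a \<Rightarrow> 'a list option) \<Rightarrow> ('a \<Rightarrow> nat) \<Rightarrow> 'a \<Rightarrow> 'a option \<Rightarrow> 'a state" where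
  "stepS M pt s d = (if set (pp s) \<inter> used M = {} then (M(s \<mapsto> pp s), pt(s := length (pp s)), None, d)
     else (M(s \<mapsto> take (hi M s) (pp s) @ drop (hj M s) (the (M (ht M s))), ht M s := None),
           pt(s := Suc (hi M s)),
           if ht M s \<in> C then Some (ht M s) else None,
           if ht M s \<in> C then d else Some (ht M s)))"

definition step :: "'a state \<Rightarrow> 'a state" where
  "step st = (case st of (M, pt, sk, d) \<Rightarrow> (case sk of None \<Rightarrow> st | Some s \<Rightarrow> stepS M pt s d))"

definition inv :: "'a state \<Rightarrow> bool" where
  "inv st = (case st of (M, pt, sk, d) \<Rightarrow>
    (\<forall>x q. M x = Some q \<longrightarrow> dpath V E q \<and> hd q = x \<and> last q \<in> Y) \<and>
    (\<forall>x y q r. M x = Some q \<longrightarrow> M y = Some r \<longrightarrow> x \<noteq> y \<longrightarrow> set q \<inter> set r = {}) \<and>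
    (case sk of Some s \<Rightarrow> s \<in> C \<and> d = None \<and> s \<in> insert s0 B \<and> dom M = insert s0 B - {s} \<and>
         set (take (pt s) (pp s)) \<inter> used M = {}
     | None \<Rightarrow> (case d of None \<Rightarrow> dom M = insert s0 B | Some t \<Rightarrow> t \<in> B - C \<and> dom M = insert s0 B - {t})) \<and>
    (\<forall>x. pt x \<noteq> 0 \<longrightarrow> x \<in> C \<and> pt x \<le> length (pp x)) \<and>
    (\<forall>x q. M x = Some q \<longrightarrow> pt x \<noteq> 0 \<longrightarrow> take (pt x) q = take (pt x) (pp x)))"

definition M0 :: "'a \<Rightarrow> 'a list option" where
  "M0 x = (if x \<in> B then Some (orig x) else None)"

definition st0 :: "'a state" where "st0 = (M0, \<lambda>_. 0, Some s0, None)"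

lemma inv_st0: "inv st0"
proof -
  have a: "\<forall>x q. M0 x = Some q \<longrightarrow> dpath V E q \<and> hd q = x \<and> last q \<in> Y"
    using orig L0 unfolding M0_def lnk_def by auto
  have b: "\<forall>x y q r. M0 x = Some q \<longrightarrow> M0 y = Some r \<longrightarrow> x \<noteq> y \<longrightarrow> set q \<inter> set r = {}"
    using orig L0 unfolding M0_def lnk_def by (metis option.inject option.distinct(1))
  have c: "dom M0 = insert s0 B - {s0}" using s0B unfolding M0_def dom_def by auto
  show ?thesis unfolding inv_def st0_def using a b c s0C by auto
qed

end


context pym begin

lemma inv_unfold:
  assumes "inv (M, pt, sk, d)"
  shows "\<And>x q. M x = Some q \<Longrightarrow> dpath V E q \<and> hd q = x \<and> last q \<in> Y"
    and "\<And>x y q r. M x = Some q \<Longrightarrow> M y = Some r \<Longrightarrow> x \<noteq> y \<Longrightarrow> set q \<inter> set r = {}"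
    and "\<And>x. pt x \<noteq> 0 \<Longrightarrow> x \<in> C \<and> pt x \<le> length (pp x)"
    and "\<And>x q. M x = Some q \<Longrightarrow> pt x \<noteq> 0 \<Longrightarrow> take (pt x) q = take (pt x) (pp x)"
  using assms unfolding inv_def by auto

lemma step_hit:
  assumes I: "inv (M, pt, Some s, None)" and H: "set (pp s) \<inter> used M \<noteq> {}"
  shows "inv (stepS M pt s None) \<and> pt s < Suc (hi M s) \<and> ht M s \<noteq> s \<and> ht M s \<in> dom M"
proof -
  note I1 = inv_unfold(1)[OF I] and I2 = inv_unfold(2)[OF I]
    and I4 = inv_unfold(3)[OF I] and I5 = inv_unfold(4)[OF I]
  have sC: "s \<in> C" and sB: "s \<in> insert s0 B" and domM: "dom M = insert s0 B - {s}"
    and I7: "set (take (pt s) (pp s)) \<inter> used M = {}"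
    using I unfolding inv_def by auto
  define p where "p = pp s"
  have pd: "dpath V E p" and phd: "hd p = s" and plast: "last p \<in> Y" and pne: "p \<noteq> []"
    using pp[OF sC] unfolding p_def by auto
  have sX: "s \<in> X" using sC CX by auto
  have s_not_used: "s \<notin> used M"
  proof
    assume "s \<in> used M"
    then obtain y r where "M y = Some r" "s \<in> set r" unfolding used_def by auto
    moreover then have "s = hd r" using X_in_path_hd[OF _ _ sX] I1 by blast
    ultimately have "M y = Some r" "y = s" using I1 by auto
    thus False using domM by auto
  qed
  define i where "i = hi M s"
  have ex: "\<exists>i. i < length p \<and> p ! i \<in> used M" using H unfolding p_def by (metis disjoint_iff in_set_conv_nth)
  have i1: "i < length p \<and> p ! i \<in> used M" unfolding i_def hi_def p_def[symmetric]
    using LeastI_ex[OF ex] .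
  have i2: "\<And>k. k < i \<Longrightarrow> p ! k \<notin> used M"
  proof -
    fix k assume "k < i"
    hence "\<not> (k < length p \<and> p ! k \<in> used M)" unfolding i_def hi_def p_def[symmetric] by (rule not_less_Least)
    thus "p ! k \<notin> used M" using \<open>k < i\<close> i1 by auto
  qed
  have i0: "i \<noteq> 0" using i1 s_not_used phd pne by (metis hd_conv_nth)
  have pti: "pt s \<le> i"
  proof (rule ccontr)
    assume "\<not> pt s \<le> i"
    hence "p ! i \<in> set (take (pt s) p)" using i1 by (metis in_set_conv_nth length_take min_less_iff_conj nth_take not_le)
    thus False using I7 i1 unfolding p_def by blast
  qed
  define v where "v = p ! i"
  obtain t q where tq: "M t = Some q" "v \<in> set q" using i1 unfolding v_def used_def by auto
  have tuniq: "\<And>t' q'. M t' = Some q' \<Longrightarrow> v \<in> set q' \<Longrightarrow> t' = t"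
    using I2 tq by blast
  have t_def: "ht M s = t" unfolding ht_def i_def[symmetric] p_def[symmetric] v_def[symmetric]
    using tq tuniq by blast
  have q_def: "the (M (ht M s)) = q" using t_def tq by simp
  have ts: "t \<noteq> s" using tq domM by auto
  have tC_or: "t \<in> insert s0 B" using tq domM by auto
  define j where "j = hj M s"
  have exj: "\<exists>j. j < length q \<and> q ! j = v" using tq by (metis in_set_conv_nth)
  have j1: "j < length q \<and> q ! j = v" unfolding j_def hj_def q_def i_def[symmetric] p_def[symmetric] v_def[symmetric]
    using LeastI_ex[OF exj] .
  have qd: "dpath V E q" and qhd: "hd q = t" and qlast: "last q \<in> Y" using I1[OF tq(1)] by auto
  define np where "np = take i p @ drop j q"
  have tp_dis: "set (take i p) \<inter> used M = {}"
    using i2 by (auto simp: in_set_conv_nth)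
  have dq_used: "set (drop j q) \<subseteq> used M" using tq(1) unfolding used_def by (auto dest: in_set_dropD)
  have npd: "dpath V E np" unfolding np_def
  proof (rule dpath_app)
    show "dpath V E (take i p)" using dpath_take[OF pd] i0 by simp
    show "dpath V E (drop j q)" using dpath_drop[OF qd] j1 by simp
    show "set (take i p) \<inter> set (drop j q) = {}" using tp_dis dq_used by blast
    have "last (take i p) = p ! (i - 1)" using i0 i1 by (subst last_conv_nth) (auto simp: min_def)
    moreover have "hd (drop j q) = v" using j1 by (simp add: hd_drop_conv_nth)
    moreover have "(p ! (i - 1), p ! i) \<in> E" using pd i0 i1 unfolding dpath_def
      by (metis Suc_pred' gr0I)
    ultimately show "(last (take i p), hd (drop j q)) \<in> E" unfolding v_def by simp
  qed
  have nphd: "hd np = s" unfolding np_def using i0 phd pne by simp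
  have nplast: "last np = last q" unfolding np_def using j1 by simp
  have nptake: "take (Suc i) np = take (Suc i) p"
  proof -
    have "take (Suc i) np = take i p @ take 1 (drop j q)" unfolding np_def using i1 by simp
    also have "take 1 (drop j q) = [v]" using j1 by (simp add: take_Suc_conv_app_nth hd_drop_conv_nth)
    finally show ?thesis using i1 unfolding v_def by (simp add: take_Suc_conv_app_nth)
  qed
  define M' where "M' = M(s \<mapsto> np, t := None)"
  define pt' where "pt' = pt(s := Suc i)"
  have stepeq: "stepS M pt s None = (M', pt', if t \<in> C then Some t else None, if t \<in> C then None else Some t)"
    unfolding stepS_def M'_def pt'_def np_def using H
    by (simp add: t_def q_def i_def[symmetric] j_def[symmetric] p_def[symmetric] tq(1))
  have M'1: "\<And>x r. M' x = Some r \<Longrightarrow> dpath V E r \<and> hd r = x \<and> last r \<in> Y"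
    using I1 npd nphd nplast qlast unfolding M'_def by (auto split: if_splits)
  have np_dis: "\<And>y r. M y = Some r \<Longrightarrow> y \<noteq> t \<Longrightarrow> set np \<inter> set r = {}"
  proof -
    fix y r assume yr: "M y = Some r" "y \<noteq> t"
    have "set (take i p) \<inter> set r = {}" using tp_dis yr unfolding used_def by blast
    moreover have "set (drop j q) \<inter> set r = {}" using I2[OF tq(1) yr(1)] yr(2) by (auto dest: in_set_dropD)
    ultimately show "set np \<inter> set r = {}" unfolding np_def by auto
  qed
  have M'2: "\<And>x y q r. M' x = Some q \<Longrightarrow> M' y = Some r \<Longrightarrow> x \<noteq> y \<Longrightarrow> set q \<inter> set r = {}"
  proof -
    have cs: "\<And>x q. M' x = Some q \<Longrightarrow> (x = s \<and> q = np) \<or> (x \<noteq> s \<and> x \<noteq> t \<and> M x = Some q)"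
      unfolding M'_def using ts by (auto split: if_splits)
    fix x y q r assume a: "M' x = Some q" "M' y = Some r" "x \<noteq> y"
    from cs[OF a(1)] cs[OF a(2)] a(3) show "set q \<inter> set r = {}"
    proof (elim disjE conjE)
      assume "x = s" "q = np" "y \<noteq> s" "y \<noteq> t" "M y = Some r"
      thus ?thesis using np_dis by blast
    next
      assume "x \<noteq> s" "x \<noteq> t" "M x = Some q" "y = s" "r = np"
      thus ?thesis using np_dis by blast
    next
      assume "x \<noteq> s" "x \<noteq> t" "M x = Some q" "y \<noteq> s" "y \<noteq> t" "M y = Some r"
      thus ?thesis using I2 a(3) by blast
    qed simp
  qed
  have domM': "dom M' = insert s0 B - {t}" using domM sB ts unfolding M'_def by auto
  have usedM': "used M' \<subseteq> set np \<union> {v. \<exists>y r. M y = Some r \<and> y \<noteq> t \<and> v \<in> set r}"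
    unfolding used_def M'_def by (auto split: if_splits)
  have pt'4: "\<And>x. pt' x \<noteq> 0 \<Longrightarrow> x \<in> C \<and> pt' x \<le> length (pp x)"
    using I4 sC i1 unfolding pt'_def p_def by auto
  have pt'5: "\<And>x r. M' x = Some r \<Longrightarrow> pt' x \<noteq> 0 \<Longrightarrow> take (pt' x) r = take (pt' x) (pp x)"
    using I5 nptake unfolding M'_def pt'_def p_def by (auto split: if_splits)
  have seek: "t \<in> C \<Longrightarrow> set (take (pt' t) (pp t)) \<inter> used M' = {}"
  proof -
    assume tC: "t \<in> C"
    have ptt: "pt' t = pt t" unfolding pt'_def using ts by simp
    show ?thesis
    proof (cases "pt t = 0")
      case True thus ?thesis using ptt by simp
    next
      case False
      have eq: "take (pt t) (pp t) = take (pt t) q" using I5[OF tq(1) False] by simp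
      have sub: "set (take (pt t) q) \<subseteq> set (pp t)" using eq by (metis in_set_takeD subsetI)
      have jge: "pt t \<le> j"
      proof (rule ccontr)
        assume "\<not> pt t \<le> j"
        hence "v \<in> set (take (pt t) q)" using j1 by (metis in_set_conv_nth length_take min_less_iff_conj nth_take not_le)
        hence "v \<in> set (pp t)" using sub by auto
        moreover have "v \<in> set (pp s)" unfolding v_def p_def using i1 p_def by auto
        ultimately show False using pp_disj[OF tC sC ts] by auto
      qed
      have qdist: "distinct q" using qd unfolding dpath_def by auto
      have d1: "set (take (pt t) q) \<inter> set (drop j q) = {}"
        using set_take_disj_set_drop_if_distinct[OF qdist jge] .
      have d2: "set (take (pt t) q) \<inter> set (take i p) = {}"
        using sub pp_disj[OF tC sC ts] unfolding p_def by (auto dest: in_set_takeD)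
      have d3: "\<And>y r. M y = Some r \<Longrightarrow> y \<noteq> t \<Longrightarrow> set (take (pt t) q) \<inter> set r = {}"
      proof -
        fix y r assume yr: "M y = Some r" "y \<noteq> t"
        have "set q \<inter> set r = {}" using I2[OF tq(1) yr(1)] yr(2) by auto
        thus "set (take (pt t) q) \<inter> set r = {}" by (auto dest: in_set_takeD)
      qed
      have d4: "set (take (pt t) q) \<inter> set np = {}" using d1 d2 unfolding np_def by auto
      have "set (take (pt t) q) \<inter> used M' = {}"
      proof (rule ccontr)
        assume "set (take (pt t) q) \<inter> used M' \<noteq> {}"
        then obtain w where w: "w \<in> set (take (pt t) q)" "w \<in> used M'" by blast
        from w(2) usedM' have "w \<in> set np \<or> (\<exists>y r. M y = Some r \<and> y \<noteq> t \<and> w \<in> set r)" by blast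
        thus False using w(1) d4 d3 by blast
      qed
      thus ?thesis using ptt eq by simp
    qed
  qed
  have "inv (M', pt', if t \<in> C then Some t else None, if t \<in> C then None else Some t)"
  proof (cases "t \<in> C")
    case True
    thus ?thesis unfolding inv_def using M'1 M'2 domM' pt'4 pt'5 seek tC_or by simp
  next
    case False
    have "t \<in> B" using tC_or False s0C by auto
    thus ?thesis unfolding inv_def using M'1 M'2 domM' pt'4 pt'5 False by simp
  qed
  thus ?thesis using stepeq pti ts tq t_def unfolding i_def by auto
qed

end


lemma mono_bounded_const:
  fixes f :: "nat \<Rightarrow> nat"
  assumes m: "\<And>n. f n \<le> f (Suc n)" and b: "\<And>n. f n \<le> b"
  shows "\<exists>N. \<forall>n\<ge>N. f n = f N"
proof -
  have fin: "finite (range f)" using b by (meson finite_atMost finite_subset image_subsetI atMost_iff)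
  obtain N where N: "f N = Max (range f)" using Max_in[OF fin] by auto
  have "\<forall>n\<ge>N. f n = f N"
  proof (intro allI impI)
    fix n assume "N \<le> n"
    hence "f N \<le> f n" using m by (simp add: lift_Suc_mono_le)
    moreover have "f n \<le> f N" using N fin by simp
    ultimately show "f n = f N" by simp
  qed
  thus ?thesis by blast
qed

context pym begin

lemma inv_step: assumes "inv st" shows "inv (step st)"
proof -
  obtain M pt sk d where st: "st = (M, pt, sk, d)" by (cases st) auto
  show ?thesis
  proof (cases sk)
    case None thus ?thesis using assms st unfolding step_def by simp
  next
    case (Some s)
    have dN: "d = None" using assms st Some unfolding inv_def by simp
    have I: "inv (M, pt, Some s, None)" using assms st Some dN by simp
    show ?thesis
    proof (cases "set (pp s) \<inter> used M = {}")
      case False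
      thus ?thesis using step_hit[OF I False] st Some dN unfolding step_def by simp
    next
      case True
      note I1 = inv_unfold(1)[OF I] and I2 = inv_unfold(2)[OF I]
        and I4 = inv_unfold(3)[OF I] and I5 = inv_unfold(4)[OF I]
      have sC: "s \<in> C" and sB: "s \<in> insert s0 B" and domM: "dom M = insert s0 B - {s}"
        using I unfolding inv_def by auto
      define M' where "M' = M(s \<mapsto> pp s)"
      define pt' where "pt' = pt(s := length (pp s))"
      have eq: "step st = (M', pt', None, None)"
        using True st Some dN unfolding step_def stepS_def M'_def pt'_def by simp
      have a: "\<forall>x q. M' x = Some q \<longrightarrow> dpath V E q \<and> hd q = x \<and> last q \<in> Y"
        using I1 pp[OF sC] unfolding M'_def by auto
      have dis: "\<And>y r. M y = Some r \<Longrightarrow> set (pp s) \<inter> set r = {}"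
        using True unfolding used_def by blast
      have b: "\<forall>x y q r. M' x = Some q \<longrightarrow> M' y = Some r \<longrightarrow> x \<noteq> y \<longrightarrow> set q \<inter> set r = {}"
      proof (intro allI impI)
        fix x y q r assume h: "M' x = Some q" "M' y = Some r" "x \<noteq> y"
        show "set q \<inter> set r = {}"
        proof (cases "x = s")
          case True thus ?thesis using h dis unfolding M'_def by auto
        next
          case False
          show ?thesis
          proof (cases "y = s")
            case True thus ?thesis using h dis \<open>x \<noteq> s\<close> unfolding M'_def by auto
          next
            case False thus ?thesis using h I2 \<open>x \<noteq> s\<close> unfolding M'_def by auto
          qed
        qed
      qed
      have c: "dom M' = insert s0 B" using domM sB unfolding M'_def by auto
      have d: "\<forall>x. pt' x \<noteq> 0 \<longrightarrow> x \<in> C \<and> pt' x \<le> length (pp x)"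
        using I4 sC unfolding pt'_def by auto
      have e: "\<forall>x q. M' x = Some q \<longrightarrow> pt' x \<noteq> 0 \<longrightarrow> take (pt' x) q = take (pt' x) (pp x)"
        using I5 unfolding M'_def pt'_def by auto
      show ?thesis unfolding eq inv_def using a b c d e by simp
    qed
  qed
qed

definition run :: "nat \<Rightarrow> 'a state" where "run n = (step ^^ n) st0"

lemma run_Suc: "run (Suc n) = step (run n)" unfolding run_def funpow.simps(2) o_apply by (rule refl)

lemma run_0: "run 0 = st0" unfolding run_def by simp

lemma inv_run: "inv (run n)"
proof (induction n)
  case 0 show ?case unfolding run_0 by (rule inv_st0)
next
  case (Suc n) thus ?case unfolding run_Suc by (rule inv_step)
qed

lemma lnk_ran:
  assumes "inv (M, pt, sk, d)" shows "lnk (dom M) (ran M)"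
proof -
  note I1 = inv_unfold(1)[OF assms] and I2 = inv_unfold(2)[OF assms]
  have a: "\<forall>p\<in>ran M. dpath V E p \<and> hd p \<in> dom M \<and> last p \<in> Y"
  proof
    fix p assume "p \<in> ran M"
    then obtain x where "M x = Some p" unfolding ran_def by auto
    thus "dpath V E p \<and> hd p \<in> dom M \<and> last p \<in> Y" using I1[of x p] by auto
  qed
  have b: "\<forall>p\<in>ran M. \<forall>q\<in>ran M. p \<noteq> q \<longrightarrow> set p \<inter> set q = {}"
  proof (intro ballI impI)
    fix p q assume "p \<in> ran M" "q \<in> ran M" "p \<noteq> q"
    then obtain x y where "M x = Some p" "M y = Some q" unfolding ran_def by auto
    moreover have "x \<noteq> y" using \<open>p \<noteq> q\<close> calculation by auto
    ultimately show "set p \<inter> set q = {}" using I2 by blast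
  qed
  have c: "hd ` ran M = dom M"
  proof
    show "hd ` ran M \<subseteq> dom M"
    proof
      fix x assume "x \<in> hd ` ran M"
      then obtain p where "p \<in> ran M" "x = hd p" by blast
      thus "x \<in> dom M" using a by blast
    qed
    show "dom M \<subseteq> hd ` ran M"
    proof
      fix x assume "x \<in> dom M"
      then obtain q where "M x = Some q" by auto
      hence "q \<in> ran M" "hd q = x" using I1 unfolding ran_def by auto
      thus "x \<in> hd ` ran M" by (metis imageI)
    qed
  qed
  show ?thesis unfolding lnk_def using a b c by blast
qed


lemma step_facts:
  assumes I: "inv (M, pt, Some s, d)" and st: "step (M, pt, Some s, d) = (M', pt', Some s', d')"
  shows "pt s < pt' s" "\<And>x. pt x \<le> pt' x" "\<And>x. x \<noteq> s \<Longrightarrow> x \<noteq> s' \<Longrightarrow> M' x = M x"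
proof -
  have dN: "d = None" using I unfolding inv_def by simp
  have I': "inv (M, pt, Some s, None)" using I dN by simp
  have H: "set (pp s) \<inter> used M \<noteq> {}"
  proof
    assume "set (pp s) \<inter> used M = {}"
    hence "step (M, pt, Some s, d) = (M(s \<mapsto> pp s), pt(s := length (pp s)), None, d)"
      unfolding step_def stepS_def by simp
    thus False using st by simp
  qed
  have sh: "pt s < Suc (hi M s)" using step_hit[OF I' H] by blast
  have eq: "step (M, pt, Some s, d) = (M(s \<mapsto> take (hi M s) (pp s) @ drop (hj M s) (the (M (ht M s))), ht M s := None),
           pt(s := Suc (hi M s)),
           if ht M s \<in> C then Some (ht M s) else None,
           if ht M s \<in> C then None else Some (ht M s))"
    unfolding step_def stepS_def using H dN by simp
  have tup: "(M', pt', Some s', d') = (M(s \<mapsto> take (hi M s) (pp s) @ drop (hj M s) (the (M (ht M s))), ht M s := None),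
           pt(s := Suc (hi M s)),
           if ht M s \<in> C then Some (ht M s) else None,
           if ht M s \<in> C then None else Some (ht M s))" using st eq by simp
  have pt': "pt' = pt(s := Suc (hi M s))" using arg_cong[where f="\<lambda>x. fst (snd x)", OF tup] by simp
  have M': "M' = M(s \<mapsto> take (hi M s) (pp s) @ drop (hj M s) (the (M (ht M s))), ht M s := None)"
    using arg_cong[where f=fst, OF tup] by simp
  have "Some s' = (if ht M s \<in> C then Some (ht M s) else None)"
    using arg_cong[where f="\<lambda>x. fst (snd (snd x))", OF tup] by simp
  hence s': "s' = ht M s" by (cases "ht M s \<in> C") auto
  show "pt s < pt' s" using pt' sh by simp
  show "\<And>x. pt x \<le> pt' x" using pt' sh by simp
  show "\<And>x. x \<noteq> s \<Longrightarrow> x \<noteq> s' \<Longrightarrow> M' x = M x" using M' s' by simp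
qed

definition Mn where "Mn n = fst (run n)"
definition ptn where "ptn n = fst (snd (run n))"
definition skn where "skn n = fst (snd (snd (run n)))"
definition dn where "dn n = snd (snd (snd (run n)))"

lemma run_split: "run n = (Mn n, ptn n, skn n, dn n)"
  unfolding Mn_def ptn_def skn_def dn_def by simp

lemma inv_n: "inv (Mn n, ptn n, skn n, dn n)" using inv_run[of n] unfolding run_split .

theorem pym_main:
  "(\<exists>L. lnk (insert s0 B) L) \<or> (\<exists>t. t \<in> B - C \<and> (\<exists>L. lnk (insert s0 B - {t}) L))"
proof (cases "\<exists>n. skn n = None")
  case True
  then obtain n where n: "skn n = None" by blast
  have I: "inv (Mn n, ptn n, None, dn n)" using inv_n[of n] n by simp
  have L: "lnk (dom (Mn n)) (ran (Mn n))" using lnk_ran[OF I] .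
  show ?thesis
  proof (cases "dn n")
    case None
    hence "dom (Mn n) = insert s0 B" using I unfolding inv_def by simp
    thus ?thesis using L by auto
  next
    case (Some t)
    hence "t \<in> B - C" "dom (Mn n) = insert s0 B - {t}" using I unfolding inv_def by auto
    thus ?thesis using L by auto
  qed
next
  case False
  hence allS: "\<And>n. \<exists>s. skn n = Some s" by (metis not_None_eq)
  have stepn: "\<And>n. run (Suc n) = step (run n)" by (rule run_Suc)
  have facts: "\<And>n. ptn n (the (skn n)) < ptn (Suc n) (the (skn n)) \<and> (\<forall>x. ptn n x \<le> ptn (Suc n) x) \<and>
     (\<forall>x. x \<noteq> the (skn n) \<longrightarrow> x \<noteq> the (skn (Suc n)) \<longrightarrow> Mn (Suc n) x = Mn n x)"
  proof -
    fix n
    obtain s where s: "skn n = Some s" using allS by blast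
    obtain s' where s': "skn (Suc n) = Some s'" using allS by blast
    have I: "inv (Mn n, ptn n, Some s, dn n)" using inv_n[of n] s by simp
    have st: "step (Mn n, ptn n, Some s, dn n) = (Mn (Suc n), ptn (Suc n), Some s', dn (Suc n))"
      using stepn[of n] s s' unfolding run_split by simp
    from step_facts[OF I st] s s' show "?thesis n" by simp
  qed
  have bound: "\<And>n x. ptn n x \<le> (if x \<in> C then length (pp x) else 0)"
  proof -
    fix n x
    show "ptn n x \<le> (if x \<in> C then length (pp x) else 0)"
      using inv_unfold(3)[OF inv_n[of n], of x] by (cases "ptn n x = 0") auto
  qed
  have stab: "\<And>x. x \<in> insert s0 B \<Longrightarrow> \<exists>K q. \<forall>n\<ge>K. Mn n x = Some q"
  proof -
    fix x assume xB: "x \<in> insert s0 B"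
    have m1: "\<And>n. ptn n x \<le> ptn (Suc n) x" using facts by blast
    have m2: "\<And>n. ptn n x \<le> (if x \<in> C then length (pp x) else 0)" by (rule bound)
    obtain N where N: "\<forall>n\<ge>N. ptn n x = ptn N x"
      using mono_bounded_const[of "\<lambda>n. ptn n x", OF m1 m2] by blast
    have nsk: "\<And>n. N \<le> n \<Longrightarrow> the (skn n) \<noteq> x"
    proof
      fix n assume "N \<le> n" "the (skn n) = x"
      hence "ptn n x < ptn (Suc n) x" using conjunct1[OF facts[of n]] by simp
      moreover have "ptn n x = ptn N x" using N \<open>N \<le> n\<close> by blast
      moreover have "ptn (Suc n) x = ptn N x" using N \<open>N \<le> n\<close> le_SucI by blast
      ultimately show False by simp
    qed
    have const: "\<And>k. Mn (Suc N + k) x = Mn (Suc N) x"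
    proof -
      fix k show "Mn (Suc N + k) x = Mn (Suc N) x"
      proof (induction k)
        case 0 show ?case by simp
      next
        case (Suc k)
        have f3: "\<forall>y. y \<noteq> the (skn (Suc N + k)) \<longrightarrow> y \<noteq> the (skn (Suc (Suc N + k))) \<longrightarrow> Mn (Suc (Suc N + k)) y = Mn (Suc N + k) y"
          using facts[of "Suc N + k"] by blast
        have "the (skn (Suc N + k)) \<noteq> x" "the (skn (Suc (Suc N + k))) \<noteq> x" using nsk by auto
        hence "Mn (Suc (Suc N + k)) x = Mn (Suc N + k) x" using f3 by metis
        thus ?case using Suc by simp
      qed
    qed
    obtain s where s: "skn (Suc N) = Some s" using allS by blast
    have "dom (Mn (Suc N)) = insert s0 B - {s}" using inv_n[of "Suc N"] s unfolding inv_def by simp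
    moreover have "s \<noteq> x" using nsk[of "Suc N"] s by simp
    ultimately obtain q where q: "Mn (Suc N) x = Some q" using xB by auto
    have "\<forall>n\<ge>Suc N. Mn n x = Some q"
    proof (intro allI impI)
      fix n assume "Suc N \<le> n"
      then obtain k where "n = Suc N + k" using le_Suc_ex by blast
      thus "Mn n x = Some q" using const q by simp
    qed
    thus "\<exists>K q. \<forall>n\<ge>K. Mn n x = Some q" by blast
  qed
  have "\<forall>x\<in>insert s0 B. \<exists>Kq. \<forall>n\<ge>fst Kq. Mn n x = Some (snd Kq)"
  proof
    fix x assume "x \<in> insert s0 B"
    then obtain K q where "\<forall>n\<ge>K. Mn n x = Some q" using stab by blast
    thus "\<exists>Kq. \<forall>n\<ge>fst Kq. Mn n x = Some (snd Kq)" by (intro exI[of _ "(K, q)"]) simp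
  qed
  then obtain g where g: "\<forall>x\<in>insert s0 B. \<forall>n\<ge>fst (g x). Mn n x = Some (snd (g x))"
    by (rule bchoice[elim_format]) blast
  define K where "K = (\<lambda>x. fst (g x))"
  define F where "F = (\<lambda>x. snd (g x))"
  have KF: "\<And>x. x \<in> insert s0 B \<Longrightarrow> \<forall>n\<ge>K x. Mn n x = Some (F x)"
    using g unfolding K_def F_def by blast
  have a: "\<forall>p\<in>F ` insert s0 B. dpath V E p \<and> hd p \<in> insert s0 B \<and> last p \<in> Y"
  proof
    fix p assume "p \<in> F ` insert s0 B"
    then obtain x where x: "x \<in> insert s0 B" "p = F x" by blast
    have "Mn (K x) x = Some p" using KF[OF x(1)] x(2) by simp
    hence "dpath V E p \<and> hd p = x \<and> last p \<in> Y"
      using inv_unfold(1)[OF inv_n[of "K x"]] by blast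
    thus "dpath V E p \<and> hd p \<in> insert s0 B \<and> last p \<in> Y" using x(1) by simp
  qed
  have hdF: "\<And>x. x \<in> insert s0 B \<Longrightarrow> hd (F x) = x"
  proof -
    fix x assume x: "x \<in> insert s0 B"
    have "Mn (K x) x = Some (F x)" using KF[OF x] by simp
    thus "hd (F x) = x" using inv_unfold(1)[OF inv_n[of "K x"]] by blast
  qed
  have b: "\<forall>p\<in>F ` insert s0 B. \<forall>q\<in>F ` insert s0 B. p \<noteq> q \<longrightarrow> set p \<inter> set q = {}"
  proof (intro ballI impI)
    fix p q assume "p \<in> F ` insert s0 B" "q \<in> F ` insert s0 B" "p \<noteq> q"
    then obtain x y where xy: "x \<in> insert s0 B" "y \<in> insert s0 B" "p = F x" "q = F y" by blast
    have "x \<noteq> y" using xy \<open>p \<noteq> q\<close> by blast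
    define n where "n = max (K x) (K y)"
    have "Mn n x = Some p" "Mn n y = Some q" using KF[OF xy(1)] KF[OF xy(2)] xy unfolding n_def by auto
    thus "set p \<inter> set q = {}" using inv_unfold(2)[OF inv_n[of n]] \<open>x \<noteq> y\<close> by blast
  qed
  have c: "hd ` F ` insert s0 B = insert s0 B"
  proof -
    have "hd ` F ` insert s0 B = (\<lambda>x. hd (F x)) ` insert s0 B" by (simp add: image_image)
    also have "\<dots> = insert s0 B" using hdF by (simp cong: image_cong)
    finally show ?thesis .
  qed
  have "lnk (insert s0 B) (F ` insert s0 B)" unfolding lnk_def using a b c by blast
  thus ?thesis by blast
qed

end


definition hs :: "nat \<Rightarrow> 'a set set \<Rightarrow> bool" where
  "hs k F \<longleftrightarrow> (\<exists>Z. finite Z \<and> card Z \<le> k \<and> (\<forall>b\<in>F. Z \<inter> b \<noteq> {}))"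

lemma hitting:
  fixes Bad :: "'a set set"
  assumes "\<forall>b\<in>Bad. finite b"
    and "\<And>F. finite F \<Longrightarrow> F \<subseteq> Bad \<Longrightarrow> hs k F"
  shows "hs k Bad"
  using assms
proof (induction k arbitrary: Bad)
  case 0
  have "Bad = {}"
  proof (rule ccontr)
    assume "Bad \<noteq> {}"
    then obtain b where b: "b \<in> Bad" by blast
    have "hs 0 {b}" using "0.prems"(2)[of "{b}"] b by simp
    then obtain Z where "finite Z" "card Z \<le> 0" "Z \<inter> b \<noteq> {}" unfolding hs_def by auto
    thus False by simp
  qed
  thus ?case unfolding hs_def by (intro exI[of _ "{}"]) simp
next
  case (Suc k)
  show ?case
  proof (cases "Bad = {}")
    case True thus ?thesis unfolding hs_def by (intro exI[of _ "{}"]) simp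
  next
    case False
    then obtain b0 where b0: "b0 \<in> Bad" by blast
    have fb0: "finite b0" using Suc.prems(1) b0 by blast
    show ?thesis
    proof (cases "\<exists>c\<in>b0. \<forall>F. finite F \<longrightarrow> F \<subseteq> {b\<in>Bad. c \<notin> b} \<longrightarrow> hs k F")
      case True
      then obtain c where c: "c \<in> b0" and H: "\<forall>F. finite F \<longrightarrow> F \<subseteq> {b\<in>Bad. c \<notin> b} \<longrightarrow> hs k F" by blast
      have fin: "\<forall>b\<in>{b\<in>Bad. c \<notin> b}. finite b" using Suc.prems(1) by blast
      have "hs k {b\<in>Bad. c \<notin> b}" using Suc.IH[OF fin] H by blast
      then obtain Z where Z: "finite Z" "card Z \<le> k" "\<forall>b\<in>{b\<in>Bad. c \<notin> b}. Z \<inter> b \<noteq> {}"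
        unfolding hs_def by blast
      have "finite (insert c Z)" using Z by simp
      moreover have "card (insert c Z) \<le> Suc k" using Z by (simp add: card_insert_if)
      moreover have "\<forall>b\<in>Bad. insert c Z \<inter> b \<noteq> {}"
      proof
        fix b assume "b \<in> Bad"
        show "insert c Z \<inter> b \<noteq> {}"
        proof (cases "c \<in> b")
          case True thus ?thesis by blast
        next
          case False thus ?thesis using Z(3) \<open>b \<in> Bad\<close> by blast
        qed
      qed
      ultimately show ?thesis unfolding hs_def by blast
    next
      case False
      have ex: "\<forall>c\<in>b0. \<exists>F. finite F \<and> F \<subseteq> {b\<in>Bad. c \<notin> b} \<and> \<not> hs k F"
      proof
        fix c assume "c \<in> b0"
        hence "\<not> (\<forall>F. finite F \<longrightarrow> F \<subseteq> {b\<in>Bad. c \<notin> b} \<longrightarrow> hs k F)" using False by blast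
        thus "\<exists>F. finite F \<and> F \<subseteq> {b\<in>Bad. c \<notin> b} \<and> \<not> hs k F" by blast
      qed
      then obtain Fc where Fc: "\<forall>c\<in>b0. finite (Fc c) \<and> Fc c \<subseteq> {b\<in>Bad. c \<notin> b} \<and> \<not> hs k (Fc c)"
        by (rule bchoice[elim_format]) blast
      define F where "F = insert b0 (\<Union>c\<in>b0. Fc c)"
      have "finite F" unfolding F_def using fb0 Fc by blast
      moreover have "F \<subseteq> Bad" unfolding F_def using Fc b0 by blast
      ultimately have "hs (Suc k) F" using Suc.prems(2) by blast
      then obtain Z where Z: "finite Z" "card Z \<le> Suc k" "\<forall>b\<in>F. Z \<inter> b \<noteq> {}"
        unfolding hs_def by blast
      have "Z \<inter> b0 \<noteq> {}" using Z(3) unfolding F_def by blast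
      then obtain c where c: "c \<in> Z" "c \<in> b0" by blast
      have "finite (Z - {c})" using Z by simp
      moreover have "card (Z - {c}) \<le> k" using Z c by simp
      moreover have "\<forall>b\<in>Fc c. (Z - {c}) \<inter> b \<noteq> {}"
      proof
        fix b assume b: "b \<in> Fc c"
        have "c \<notin> b" using Fc c(2) b by blast
        moreover have "b \<in> F" using b c(2) unfolding F_def by blast
        ultimately show "(Z - {c}) \<inter> b \<noteq> {}" using Z(3) by blast
      qed
      ultimately have "hs k (Fc c)" unfolding hs_def by blast
      thus ?thesis using Fc c(2) by blast
    qed
  qed
qed

lemma dpath_restrict:
  assumes "dpath V1 E1 r" "E1 \<subseteq> E" "set r \<subseteq> V" "set r \<inter> W = {}"
  shows "dpath (V - W) (del_verts E W) r"
proof -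
  have "\<And>i. Suc i < length r \<Longrightarrow> r ! i \<notin> W \<and> r ! Suc i \<notin> W"
    using assms(4) by (metis Suc_lessD disjoint_iff nth_mem)
  thus ?thesis using assms unfolding dpath_def del_verts_def by auto
qed

context pg begin

lemma lnk_sub:
  assumes "lnk S R" "S' \<subseteq> S" shows "lnk S' {r\<in>R. hd r \<in> S'}"
proof -
  have "hd ` {r\<in>R. hd r \<in> S'} = S'"
  proof
    show "hd ` {r\<in>R. hd r \<in> S'} \<subseteq> S'" by blast
    show "S' \<subseteq> hd ` {r\<in>R. hd r \<in> S'}"
    proof
      fix x assume "x \<in> S'"
      hence "x \<in> hd ` R" using assms unfolding lnk_def by blast
      then obtain r where "r \<in> R" "x = hd r" by blast
      thus "x \<in> hd ` {r\<in>R. hd r \<in> S'}" using \<open>x \<in> S'\<close> by blast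
    qed
  qed
  thus ?thesis using assms unfolding lnk_def by blast
qed

lemma readd:
  assumes X'X: "X' \<subseteq> X" and P: "lnk X' P"
  shows "finite L \<Longrightarrow> L \<subseteq> X' \<Longrightarrow> finite H' \<Longrightarrow> H' \<subseteq> X - X' \<Longrightarrow> lnk ((X' - L) \<union> H') R \<Longrightarrow>
    \<exists>H''\<subseteq>H'. card (H' - H'') \<le> card L \<and> (\<exists>R. lnk (X' \<union> H'') R)"
proof (induction L arbitrary: H' R rule: finite_induct)
  case empty
  thus ?case by (intro exI[of _ H']) auto
next
  case (insert a L)
  define B where "B = (X' - insert a L) \<union> H'"
  have aX': "a \<in> X'" using insert by blast
  interpret pym V E X Y B X' R P a
  proof
    show "B \<subseteq> X" unfolding B_def using X'X insert.prems by blast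
    show "X' \<subseteq> X" by (rule X'X)
    show "lnk B R" unfolding B_def by (rule insert.prems(4))
    show "lnk X' P" by (rule P)
    show "a \<in> X'" by (rule aX')
    show "a \<notin> B" unfolding B_def using insert.prems(3) aX' by blast
  qed
  have iB: "insert a B = (X' - L) \<union> H'" unfolding B_def using aX' insert.hyps(2) by blast
  have fin: "finite L" "L \<subseteq> X'" using insert by auto
  from pym_main show ?case
  proof
    assume "\<exists>L'. lnk (insert a B) L'"
    then obtain R' where "lnk ((X' - L) \<union> H') R'" using iB by auto
    from insert.IH[OF fin(2) insert.prems(2,3) this] obtain H'' where
      "H'' \<subseteq> H'" "card (H' - H'') \<le> card L" "\<exists>R. lnk (X' \<union> H'') R" by blast
    moreover have "card (insert a L) = Suc (card L)" using insert.hyps by simp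
    ultimately show ?thesis by (intro exI[of _ H'']) auto
  next
    assume "\<exists>t. t \<in> B - X' \<and> (\<exists>L'. lnk (insert a B - {t}) L')"
    then obtain t R' where t: "t \<in> B - X'" and R': "lnk (insert a B - {t}) R'" by blast
    have tH: "t \<in> H'" using t unfolding B_def by blast
    have "insert a B - {t} = (X' - L) \<union> (H' - {t})" using iB t by blast
    hence R'': "lnk ((X' - L) \<union> (H' - {t})) R'" using R' by simp
    have "finite (H' - {t})" "H' - {t} \<subseteq> X - X'" using insert.prems by auto
    from insert.IH[OF fin(2) this R''] obtain H'' where
      H'': "H'' \<subseteq> H' - {t}" "card (H' - {t} - H'') \<le> card L" "\<exists>R. lnk (X' \<union> H'') R" by blast
    have "H' - H'' = insert t (H' - {t} - H'')" using H''(1) tH by blast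
    moreover have "finite (H' - {t} - H'')" using insert.prems(2) by simp
    ultimately have "card (H' - H'') \<le> Suc (card (H' - {t} - H''))" by (simp add: card_insert_if)
    moreover have "card (insert a L) = Suc (card L)" using insert.hyps by simp
    ultimately have "card (H' - H'') \<le> card (insert a L)" using H''(2) by linarith
    thus ?thesis using H'' by blast
  qed
qed

end


lemma lemmaA:
  fixes V :: "'a set" and E X Y X' U H Q P
  assumes src: "\<forall>x\<in>X. \<forall>u. (u, x) \<notin> E" and snk: "\<forall>y\<in>Y. \<forall>w. (y, w) \<notin> E"
    and X'X: "X' \<subseteq> X" and fU: "finite U" and fH: "finite H" and HX: "H \<subseteq> X - X'"
    and Q: "pg.lnk V E Y (X' \<union> H) Q"
    and P: "pg.lnk (V - U) (del_verts E U) (Y - U) X' P"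
  shows "\<exists>H'\<subseteq>H. card (H - H') \<le> card U \<and> (\<exists>R. pg.lnk (V - U) (del_verts E U) (Y - U) (X' \<union> H') R)"
proof -
  interpret D: pg V E X Y using src snk by unfold_locales auto
  interpret DU: pg "V - U" "del_verts E U" X "Y - U" using src snk by unfold_locales (auto simp: del_verts_def)
  have Qp: "\<forall>q\<in>Q. dpath V E q \<and> hd q \<in> X' \<union> H \<and> last q \<in> Y"
    and Qd: "\<forall>p\<in>Q. \<forall>q\<in>Q. p \<noteq> q \<longrightarrow> set p \<inter> set q = {}"
    and Qh: "hd ` Q = X' \<union> H" using Q unfolding D.lnk_def by auto
  define K where "K = {q\<in>Q. set q \<inter> U \<noteq> {}}"
  define Q' where "Q' = {q\<in>Q. set q \<inter> U = {}}"
  define f where "f q = (SOME u. u \<in> set q \<inter> U)" for q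
  have fK: "\<And>q. q \<in> K \<Longrightarrow> f q \<in> set q \<inter> U"
    unfolding f_def K_def by (rule someI_ex) blast
  have injf: "inj_on f K"
  proof
    fix q1 q2 assume a: "q1 \<in> K" "q2 \<in> K" "f q1 = f q2"
    show "q1 = q2"
    proof (rule ccontr)
      assume "q1 \<noteq> q2"
      hence "set q1 \<inter> set q2 = {}" using Qd a unfolding K_def by blast
      thus False using fK[OF a(1)] fK[OF a(2)] a(3) by auto
    qed
  qed
  have fKU: "f ` K \<subseteq> U" using fK by blast
  have finK: "finite K" using finite_imageD[OF finite_subset[OF fKU fU] injf] .
  have cardK: "card K \<le> card U" using card_image[OF injf] card_mono[OF fU fKU] by simp
  have Q'p: "\<forall>q\<in>Q'. dpath (V - U) (del_verts E U) q \<and> hd q \<in> hd ` Q' \<and> last q \<in> Y - U"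
  proof
    fix q assume q: "q \<in> Q'"
    hence qQ: "q \<in> Q" and qU: "set q \<inter> U = {}" unfolding Q'_def by auto
    have d: "dpath V E q" using Qp qQ by blast
    have "dpath (V - U) (del_verts E U) q" using dpath_restrict[OF d subset_refl _ qU] d
      unfolding dpath_def by blast
    moreover have "last q \<in> Y - U" using Qp qQ qU d unfolding dpath_def by (auto simp: disjoint_iff)
    ultimately show "dpath (V - U) (del_verts E U) q \<and> hd q \<in> hd ` Q' \<and> last q \<in> Y - U"
      using q by blast
  qed
  have Q'l: "DU.lnk (hd ` Q') Q'" unfolding DU.lnk_def using Q'p Qd unfolding Q'_def by blast
  have hdinj: "\<And>p q. p \<in> Q \<Longrightarrow> q \<in> Q \<Longrightarrow> hd p = hd q \<Longrightarrow> p = q"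
    using D.lnk_unique_hd[OF Q] by blast
  have S1: "hd ` Q' = (X' \<union> H) - hd ` K"
  proof
    show "hd ` Q' \<subseteq> X' \<union> H - hd ` K"
    proof
      fix x assume "x \<in> hd ` Q'"
      then obtain q where q: "q \<in> Q'" "x = hd q" by blast
      have "x \<in> X' \<union> H" using q Qh unfolding Q'_def by blast
      moreover have "x \<notin> hd ` K"
      proof
        assume "x \<in> hd ` K"
        then obtain p where "p \<in> K" "x = hd p" by blast
        hence "p = q" using hdinj q unfolding K_def Q'_def by blast
        thus False using q \<open>p \<in> K\<close> unfolding K_def Q'_def by blast
      qed
      ultimately show "x \<in> X' \<union> H - hd ` K" by blast
    qed
    show "X' \<union> H - hd ` K \<subseteq> hd ` Q'"
    proof
      fix x assume x: "x \<in> X' \<union> H - hd ` K"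
      then obtain q where q: "q \<in> Q" "x = hd q" using Qh by blast
      have "q \<notin> K" using x q by blast
      hence "q \<in> Q'" using q unfolding K_def Q'_def by blast
      thus "x \<in> hd ` Q'" using q by blast
    qed
  qed
  define L where "L = X' \<inter> hd ` K"
  define H1 where "H1 = H - hd ` K"
  have HX': "H \<inter> X' = {}" using HX by blast
  have S1': "hd ` Q' = (X' - L) \<union> H1" unfolding S1 L_def H1_def using HX' by blast
  have finL: "finite L" unfolding L_def using finK by simp
  have "L \<subseteq> X'" "finite H1" "H1 \<subseteq> X - X'" unfolding L_def H1_def using fH HX by auto
  note hyps = this
  have Q'l2: "DU.lnk ((X' - L) \<union> H1) Q'" using Q'l S1' by simp
  from DU.readd[OF X'X P finL hyps(1) hyps(2) hyps(3) Q'l2] obtain H'' where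
    H'': "H'' \<subseteq> H1" "card (H1 - H'') \<le> card L" "\<exists>R. DU.lnk (X' \<union> H'') R" by blast
  have "H - H'' \<subseteq> (H \<inter> hd ` K) \<union> (H1 - H'')" unfolding H1_def by blast
  hence c1: "card (H - H'') \<le> card (H \<inter> hd ` K) + card (H1 - H'')"
  proof -
    have "finite ((H \<inter> hd ` K) \<union> (H1 - H''))" unfolding H1_def using fH by simp
    hence "card (H - H'') \<le> card ((H \<inter> hd ` K) \<union> (H1 - H''))" using \<open>H - H'' \<subseteq> _\<close> by (rule card_mono)
    also have "\<dots> \<le> card (H \<inter> hd ` K) + card (H1 - H'')" by (rule card_Un_le)
    finally show ?thesis .
  qed
  have "card (H \<inter> hd ` K) + card L = card ((H \<inter> hd ` K) \<union> L)"
    unfolding L_def using HX' finK by (intro card_Un_disjoint[symmetric]) auto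
  also have "\<dots> \<le> card (hd ` K)" unfolding L_def using finK by (intro card_mono) auto
  also have "\<dots> \<le> card K" using finK by (rule card_image_le)
  finally have "card (H \<inter> hd ` K) + card L \<le> card U" using cardK by linarith
  hence "card (H - H'') \<le> card U" using c1 H''(2) by linarith
  moreover have "H'' \<subseteq> H" using H''(1) unfolding H1_def by blast
  ultimately show ?thesis using H''(3) by blast
qed


theorem lemma4p7:
  fixes V :: "'a set" and E :: "('a \<times> 'a) set" and X Y X' U :: "'a set"
  assumes "digraph V E"
    and "X \<subseteq> V" and "Y \<subseteq> V"
    and "\<forall>x\<in>X. \<forall>u. (u, x) \<notin> E"
    and "\<forall>y\<in>Y. \<forall>w. (y, w) \<notin> E"
    and "fin_extendable V E X Y X'"
    and "finite U" and "U \<subseteq> V - X'"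
    and "joinable (V - U) (del_verts E U) X' (Y - U)"
  shows "\<exists>W. U \<subseteq> W \<and> W - U \<subseteq> X - X' \<and> finite W \<and> card (W - U) \<le> card U \<and>
           fin_extendable (V - W) (del_verts E W) (X - W) (Y - W) X'"
proof -
  have src: "\<forall>x\<in>X. \<forall>u. (u, x) \<notin> E" and snk: "\<forall>y\<in>Y. \<forall>w. (y, w) \<notin> E" using assms(4,5) .
  interpret D: pg V E X Y using src snk by unfold_locales auto
  interpret DU: pg "V - U" "del_verts E U" X "Y - U" using src snk by unfold_locales (auto simp: del_verts_def)
  have X'X: "X' \<subseteq> X" and fe: "\<And>S. X' \<subseteq> S \<Longrightarrow> S \<subseteq> X \<Longrightarrow> finite (S - X') \<Longrightarrow> joinable V E S Y"
    using assms(6) unfolding fin_extendable_def by auto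
  obtain P where P: "DU.lnk X' P" using assms(9) DU.joinable_iff[OF X'X] by blast
  define G where "G = X - X' - U"
  define J where "J F \<longleftrightarrow> (\<exists>R. DU.lnk (X' \<union> F) R)" for F
  have loc: "\<And>H. finite H \<Longrightarrow> H \<subseteq> G \<Longrightarrow> \<exists>Z\<subseteq>H. card Z \<le> card U \<and> J (H - Z)"
  proof -
    fix H assume fH: "finite H" and HG: "H \<subseteq> G"
    have "X' \<union> H \<subseteq> X" using X'X HG unfolding G_def by blast
    moreover have "joinable V E (X' \<union> H) Y"
    proof (rule fe)
      show "X' \<subseteq> X' \<union> H" by blast
      show "X' \<union> H \<subseteq> X" using X'X HG unfolding G_def by blast
      show "finite (X' \<union> H - X')" using fH by (rule finite_subset[rotated]) blast
    qed
    ultimately obtain Q where Q: "D.lnk (X' \<union> H) Q" using D.joinable_iff by blast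
    have HX: "H \<subseteq> X - X'" using HG unfolding G_def by blast
    from lemmaA[OF src snk X'X assms(7) fH HX Q P] obtain H' where
      H': "H' \<subseteq> H" "card (H - H') \<le> card U" "\<exists>R. DU.lnk (X' \<union> H') R" by blast
    have "H - (H - H') = H'" using H'(1) by blast
    hence "J (H - (H - H'))" using H'(3) unfolding J_def by simp
    thus "\<exists>Z\<subseteq>H. card Z \<le> card U \<and> J (H - Z)" using H'(2) by blast
  qed
  have down: "\<And>F F'. J F \<Longrightarrow> F' \<subseteq> F \<Longrightarrow> J F'"
  proof -
    fix F F' assume "J F" "F' \<subseteq> F"
    then obtain R where "DU.lnk (X' \<union> F) R" unfolding J_def by blast
    from DU.lnk_sub[OF this, of "X' \<union> F'"] \<open>F' \<subseteq> F\<close> show "J F'" unfolding J_def by blast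
  qed
  define Bad where "Bad = {b. b \<subseteq> G \<and> finite b \<and> \<not> J b}"
  have "hs (card U) Bad"
  proof (rule hitting)
    show "\<forall>b\<in>Bad. finite b" unfolding Bad_def by blast
    fix F assume fF: "finite F" and FB: "F \<subseteq> Bad"
    define H where "H = \<Union>F"
    have fH: "finite H" unfolding H_def using fF FB unfolding Bad_def by blast
    have HG: "H \<subseteq> G" unfolding H_def using FB unfolding Bad_def by blast
    obtain Z where Z: "Z \<subseteq> H" "card Z \<le> card U" "J (H - Z)" using loc[OF fH HG] by blast
    have "\<forall>b\<in>F. Z \<inter> b \<noteq> {}"
    proof
      fix b assume b: "b \<in> F"
      show "Z \<inter> b \<noteq> {}"
      proof
        assume "Z \<inter> b = {}"
        hence "b \<subseteq> H - Z" using b unfolding H_def by blast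
        hence "J b" using down[OF Z(3)] by blast
        thus False using b FB unfolding Bad_def by blast
      qed
    qed
    moreover have "finite Z" using Z(1) fH finite_subset by blast
    ultimately show "hs (card U) F" unfolding hs_def using Z(2) by blast
  qed
  then obtain Z0 where Z0: "finite Z0" "card Z0 \<le> card U" "\<forall>b\<in>Bad. Z0 \<inter> b \<noteq> {}"
    unfolding hs_def by blast
  define Z where "Z = Z0 \<inter> G"
  have fZ: "finite Z" unfolding Z_def using Z0 by simp
  have cZ: "card Z \<le> card U" unfolding Z_def using Z0 card_mono[of Z0 "Z0 \<inter> G"] by auto
  have good: "\<And>H. finite H \<Longrightarrow> H \<subseteq> G - Z \<Longrightarrow> J H"
  proof (rule ccontr)
    fix H assume fH: "finite H" and HG: "H \<subseteq> G - Z" and nJ: "\<not> J H"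
    hence "H \<in> Bad" unfolding Bad_def by blast
    then obtain z where "z \<in> Z0" "z \<in> H" using Z0(3) by blast
    thus False using HG unfolding Z_def by blast
  qed
  define W where "W = U \<union> Z"
  have W1: "U \<subseteq> W" unfolding W_def by blast
  have W2: "W - U \<subseteq> X - X'" unfolding W_def Z_def G_def by blast
  have W3: "finite W" unfolding W_def using assms(7) fZ by simp
  have W4: "card (W - U) \<le> card U"
  proof -
    have "card (W - U) \<le> card Z" using fZ unfolding W_def by (intro card_mono) auto
    thus ?thesis using cZ by linarith
  qed
  interpret DW: pg "V - W" "del_verts E W" X "Y - W" using src snk by unfold_locales (auto simp: del_verts_def)
  have X'W: "X' \<subseteq> X - W" using X'X assms(8) unfolding W_def Z_def G_def by blast
  have "\<forall>S. X' \<subseteq> S \<and> S \<subseteq> X - W \<and> finite (S - X') \<longrightarrow> joinable (V - W) (del_verts E W) S (Y - W)"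
  proof (intro allI impI)
    fix S assume S: "X' \<subseteq> S \<and> S \<subseteq> X - W \<and> finite (S - X')"
    have "S - X' \<subseteq> G - Z" using S unfolding G_def W_def by blast
    hence "J (S - X')" using good S by blast
    moreover have "X' \<union> (S - X') = S" using S by blast
    ultimately obtain R where R: "DU.lnk S R" unfolding J_def by auto
    have Rp: "\<forall>r\<in>R. dpath (V - U) (del_verts E U) r \<and> hd r \<in> S \<and> last r \<in> Y - U"
      and Rd: "\<forall>p\<in>R. \<forall>q\<in>R. p \<noteq> q \<longrightarrow> set p \<inter> set q = {}"
      and Rh: "hd ` R = S" using R unfolding DU.lnk_def by auto
    have "\<forall>r\<in>R. dpath (V - W) (del_verts E W) r \<and> hd r \<in> S \<and> last r \<in> Y - W"
    proof
      fix r assume r: "r \<in> R"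
      have d: "dpath (V - U) (del_verts E U) r" and hr: "hd r \<in> S" and lr: "last r \<in> Y - U"
        using Rp r by auto
      have sV: "set r \<subseteq> V - U" using d unfolding dpath_def by blast
      have dis: "set r \<inter> W = {}"
      proof (rule ccontr)
        assume "set r \<inter> W \<noteq> {}"
        then obtain v where v: "v \<in> set r" "v \<in> W" by blast
        have "v \<in> Z" using v sV unfolding W_def by blast
        hence "v \<in> X" unfolding Z_def G_def by blast
        hence "v = hd r" using DU.X_in_path_hd[OF d v(1)] by blast
        thus False using v(2) hr S by blast
      qed
      have "dpath (V - W) (del_verts E W) r"
        using dpath_restrict[OF d _ _ dis] sV by (auto simp: del_verts_def)
      moreover have "last r \<in> Y - W" using lr dis d unfolding dpath_def by (auto simp: disjoint_iff)
      ultimately show "dpath (V - W) (del_verts E W) r \<and> hd r \<in> S \<and> last r \<in> Y - W" using hr by blast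
    qed
    hence "DW.lnk S R" unfolding DW.lnk_def using Rd Rh by blast
    thus "joinable (V - W) (del_verts E W) S (Y - W)" using DW.joinable_iff S by blast
  qed
  hence "fin_extendable (V - W) (del_verts E W) (X - W) (Y - W) X'"
    unfolding fin_extendable_def using X'W by blast
  thus ?thesis using W1 W2 W3 W4 by blast
qed

end
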